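(* Let $\mathbf{L}=(L,\le)$ be a nontrivial finite join-semilattice with greatest element $1$ satisfying property $( * )$, and let $(R,\vee,\circ)$ be a subsemiring of $(\mathrm{JM}_1(\mathbf{L}),\vee,\circ)$ such that (i) $f_{a,b}\in R$ for all $a\in L\setminus\{1\}$ and $b\in L$; (ii) for every $f\in R$ there exist $a\in L\setminus\{1\}$ and $b\in L$ with $f_{a,b}\le f$ (pointwise). Then $(R,\vee,\circ)$ is a finite simple additively idempotent semiring with absorbing greatest element, and it possesses an idempotent irreducible $R$-semimodule satisfying $( * )$. Conversely, every finite simple additively idempotent semiring $(S,+,\cdot)$ with $|S|>2$, with absorbing greatest element, and which possesses an idempotent irreducible $S$-semimodule satisfying $( * )$, is isomorphic to such a semiring $(R,\vee,\circ)$ for some such $\mathbf{L}$.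
   Context: A semiring is a nonempty set with a commutative semigroup operation $+$ and a semigroup operation $\cdot$ satisfying both distributive laws; simple if its only congruences are the identity and the full relation; additively idempotent if $r+r=r$, with order $x\le y:\Leftrightarrow x+y=y$ and (finite case) greatest element the sum of all elements. An element is absorbing if $sr=r=rs$ for all $s$. For a finite join-semilattice $\mathbf{L}$, $\mathrm{JM}_1(\mathbf{L})$ is the set of join-preserving maps $f:L\to L$ with $f(1)=1$, a semiring under pointwise join and composition; $f_{a,b}(x)=b$ if $x\le a$ and $1$ otherwise. An $R$-semimodule is a commutative semigroup $(M,+)$ with an action $R\times M\to M$ such that $r(sx)=(rs)x$, $(r+s)x=rx+sx$, $r(x+y)=rx+ry$; it is idempotent if $x+x=x$. A subsemimodule is a subsemigroup closed under the action; a semimodule congruence is an equivalence compatible with $+$ and the action. $M$ is quasitrivial if $rx=sx$ for all $r,s\in R,x\in M$; id-quasitrivial if $rx=x$ for all $r,x$. $M$ is sub-irreducible if it is not quasitrivial and all its proper subsemimodules are id-quasitrivial; quotient-irreducible if it is not quasitrivial and its only congruences are the identity and $M\times M$; irreducible if both. A finite idempotent commutative semigroup (semilattice) $(M,+)$ with greatest element $\infty_M$ satisfies $( * )$ if there exists $u\in M$ with $\infty_M\ne u+x$ for all $x\in M\setminus\{\infty_M\}$. *)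

theory Defs
  imports "HOL-Library.FuncSet"
begin

definition semiring :: "'a set \<Rightarrow> ('a \<Rightarrow> 'a \<Rightarrow> 'a) \<Rightarrow> ('a \<Rightarrow> 'a \<Rightarrow> 'a) \<Rightarrow> bool" where
  "semiring S add mul \<longleftrightarrow> S \<noteq> {} \<and>
     (\<forall>x\<in>S. \<forall>y\<in>S. add x y \<in> S \<and> mul x y \<in> S) \<and>
     (\<forall>x\<in>S. \<forall>y\<in>S. add x y = add y x) \<and>
     (\<forall>x\<in>S. \<forall>y\<in>S. \<forall>z\<in>S.
        add (add x y) z = add x (add y z) \<and>
        mul (mul x y) z = mul x (mul y z) \<and>
        mul x (add y z) = add (mul x y) (mul x z) \<and>
        mul (add x y) z = add (mul x z) (mul y z))"

definition semiring_cong :: "'a set \<Rightarrow> ('a \<Rightarrow> 'a \<Rightarrow> 'a) \<Rightarrow> ('a \<Rightarrow> 'a \<Rightarrow> 'a) \<Rightarrow> ('a \<times> 'a) set \<Rightarrow> bool" where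
  "semiring_cong S add mul \<theta> \<longleftrightarrow> equiv S \<theta> \<and>
     (\<forall>a b c d. (a, b) \<in> \<theta> \<longrightarrow> (c, d) \<in> \<theta> \<longrightarrow>
        (add a c, add b d) \<in> \<theta> \<and> (mul a c, mul b d) \<in> \<theta>)"

definition simple_semiring :: "'a set \<Rightarrow> ('a \<Rightarrow> 'a \<Rightarrow> 'a) \<Rightarrow> ('a \<Rightarrow> 'a \<Rightarrow> 'a) \<Rightarrow> bool" where
  "simple_semiring S add mul \<longleftrightarrow> semiring S add mul \<and>
     (\<forall>\<theta>. semiring_cong S add mul \<theta> \<longrightarrow> \<theta> = Id_on S \<or> \<theta> = S \<times> S)"

definition add_idempotent :: "'a set \<Rightarrow> ('a \<Rightarrow> 'a \<Rightarrow> 'a) \<Rightarrow> bool" where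
  "add_idempotent S add \<longleftrightarrow> (\<forall>x\<in>S. add x x = x)"

definition has_absorbing_greatest :: "'a set \<Rightarrow> ('a \<Rightarrow> 'a \<Rightarrow> 'a) \<Rightarrow> ('a \<Rightarrow> 'a \<Rightarrow> 'a) \<Rightarrow> bool" where
  "has_absorbing_greatest S add mul \<longleftrightarrow>
     (\<exists>g\<in>S. (\<forall>x\<in>S. add x g = g) \<and> (\<forall>s\<in>S. mul s g = g \<and> mul g s = g))"

definition semiring_iso :: "'a set \<Rightarrow> ('a \<Rightarrow> 'a \<Rightarrow> 'a) \<Rightarrow> ('a \<Rightarrow> 'a \<Rightarrow> 'a) \<Rightarrow>
    'b set \<Rightarrow> ('b \<Rightarrow> 'b \<Rightarrow> 'b) \<Rightarrow> ('b \<Rightarrow> 'b \<Rightarrow> 'b) \<Rightarrow> ('a \<Rightarrow> 'b) \<Rightarrow> bool" where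
  "semiring_iso S add mul T add' mul' \<phi> \<longleftrightarrow> bij_betw \<phi> S T \<and>
     (\<forall>x\<in>S. \<forall>y\<in>S. \<phi> (add x y) = add' (\<phi> x) (\<phi> y) \<and> \<phi> (mul x y) = mul' (\<phi> x) (\<phi> y))"

definition semimodule :: "'s set \<Rightarrow> ('s \<Rightarrow> 's \<Rightarrow> 's) \<Rightarrow> ('s \<Rightarrow> 's \<Rightarrow> 's) \<Rightarrow>
    'm set \<Rightarrow> ('m \<Rightarrow> 'm \<Rightarrow> 'm) \<Rightarrow> ('s \<Rightarrow> 'm \<Rightarrow> 'm) \<Rightarrow> bool" where
  "semimodule S add mul M madd act \<longleftrightarrow> semiring S add mul \<and>
     (\<forall>x\<in>M. \<forall>y\<in>M. madd x y \<in> M \<and> madd x y = madd y x) \<and>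
     (\<forall>x\<in>M. \<forall>y\<in>M. \<forall>z\<in>M. madd (madd x y) z = madd x (madd y z)) \<and>
     (\<forall>r\<in>S. \<forall>x\<in>M. act r x \<in> M) \<and>
     (\<forall>r\<in>S. \<forall>s\<in>S. \<forall>x\<in>M.
        act r (act s x) = act (mul r s) x \<and> act (add r s) x = madd (act r x) (act s x)) \<and>
     (\<forall>r\<in>S. \<forall>x\<in>M. \<forall>y\<in>M. act r (madd x y) = madd (act r x) (act r y))"

definition smod_idempotent :: "'m set \<Rightarrow> ('m \<Rightarrow> 'm \<Rightarrow> 'm) \<Rightarrow> bool" where
  "smod_idempotent M madd \<longleftrightarrow> (\<forall>x\<in>M. madd x x = x)"

definition subsemimodule :: "'s set \<Rightarrow> 'm set \<Rightarrow> ('m \<Rightarrow> 'm \<Rightarrow> 'm) \<Rightarrow> ('s \<Rightarrow> 'm \<Rightarrow> 'm) \<Rightarrow> 'm set \<Rightarrow> bool" where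
  "subsemimodule S M madd act N \<longleftrightarrow> N \<noteq> {} \<and> N \<subseteq> M \<and>
     (\<forall>x\<in>N. \<forall>y\<in>N. madd x y \<in> N) \<and> (\<forall>r\<in>S. \<forall>x\<in>N. act r x \<in> N)"

definition quasitrivial :: "'s set \<Rightarrow> 'm set \<Rightarrow> ('s \<Rightarrow> 'm \<Rightarrow> 'm) \<Rightarrow> bool" where
  "quasitrivial S M act \<longleftrightarrow> (\<forall>r\<in>S. \<forall>s\<in>S. \<forall>x\<in>M. act r x = act s x)"

definition id_quasitrivial :: "'s set \<Rightarrow> 'm set \<Rightarrow> ('s \<Rightarrow> 'm \<Rightarrow> 'm) \<Rightarrow> bool" where
  "id_quasitrivial S M act \<longleftrightarrow> (\<forall>r\<in>S. \<forall>x\<in>M. act r x = x)"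

definition smod_cong :: "'s set \<Rightarrow> 'm set \<Rightarrow> ('m \<Rightarrow> 'm \<Rightarrow> 'm) \<Rightarrow> ('s \<Rightarrow> 'm \<Rightarrow> 'm) \<Rightarrow> ('m \<times> 'm) set \<Rightarrow> bool" where
  "smod_cong S M madd act \<theta> \<longleftrightarrow> equiv M \<theta> \<and>
     (\<forall>a b c d. (a, b) \<in> \<theta> \<longrightarrow> (c, d) \<in> \<theta> \<longrightarrow> (madd a c, madd b d) \<in> \<theta>) \<and>
     (\<forall>r\<in>S. \<forall>a b. (a, b) \<in> \<theta> \<longrightarrow> (act r a, act r b) \<in> \<theta>)"

definition sub_irreducible :: "'s set \<Rightarrow> ('s \<Rightarrow> 's \<Rightarrow> 's) \<Rightarrow> ('s \<Rightarrow> 's \<Rightarrow> 's) \<Rightarrow>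
    'm set \<Rightarrow> ('m \<Rightarrow> 'm \<Rightarrow> 'm) \<Rightarrow> ('s \<Rightarrow> 'm \<Rightarrow> 'm) \<Rightarrow> bool" where
  "sub_irreducible S add mul M madd act \<longleftrightarrow> semimodule S add mul M madd act \<and>
     \<not> quasitrivial S M act \<and>
     (\<forall>N. subsemimodule S M madd act N \<and> N \<noteq> M \<longrightarrow> id_quasitrivial S N act)"

definition quot_irreducible :: "'s set \<Rightarrow> ('s \<Rightarrow> 's \<Rightarrow> 's) \<Rightarrow> ('s \<Rightarrow> 's \<Rightarrow> 's) \<Rightarrow>
    'm set \<Rightarrow> ('m \<Rightarrow> 'm \<Rightarrow> 'm) \<Rightarrow> ('s \<Rightarrow> 'm \<Rightarrow> 'm) \<Rightarrow> bool" where
  "quot_irreducible S add mul M madd act \<longleftrightarrow> semimodule S add mul M madd act \<and>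
     \<not> quasitrivial S M act \<and>
     (\<forall>\<theta>. smod_cong S M madd act \<theta> \<longrightarrow> \<theta> = Id_on M \<or> \<theta> = M \<times> M)"

definition irreducible_smod :: "'s set \<Rightarrow> ('s \<Rightarrow> 's \<Rightarrow> 's) \<Rightarrow> ('s \<Rightarrow> 's \<Rightarrow> 's) \<Rightarrow>
    'm set \<Rightarrow> ('m \<Rightarrow> 'm \<Rightarrow> 'm) \<Rightarrow> ('s \<Rightarrow> 'm \<Rightarrow> 'm) \<Rightarrow> bool" where
  "irreducible_smod S add mul M madd act \<longleftrightarrow>
     sub_irreducible S add mul M madd act \<and> quot_irreducible S add mul M madd act"

definition sl_star :: "'m set \<Rightarrow> ('m \<Rightarrow> 'm \<Rightarrow> 'm) \<Rightarrow> bool" where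
  "sl_star M madd \<longleftrightarrow> finite M \<and>
     (\<exists>g\<in>M. (\<forall>x\<in>M. madd x g = g) \<and> (\<exists>u\<in>M. \<forall>x\<in>M - {g}. g \<noteq> madd u x))"

definition fin_join_sl :: "'l set \<Rightarrow> ('l \<Rightarrow> 'l \<Rightarrow> 'l) \<Rightarrow> 'l \<Rightarrow> bool" where
  "fin_join_sl L j one \<longleftrightarrow> finite L \<and> one \<in> L \<and>
     (\<forall>x\<in>L. \<forall>y\<in>L. j x y \<in> L \<and> j x y = j y x) \<and>
     (\<forall>x\<in>L. j x x = x) \<and>
     (\<forall>x\<in>L. \<forall>y\<in>L. \<forall>z\<in>L. j (j x y) z = j x (j y z)) \<and>
     (\<forall>x\<in>L. j x one = one)"

definition sl_le :: "('l \<Rightarrow> 'l \<Rightarrow> 'l) \<Rightarrow> 'l \<Rightarrow> 'l \<Rightarrow> bool" where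
  "sl_le j x y \<longleftrightarrow> j x y = y"

text \<open>Maps on L are represented as extensional functions (undefined outside L).\<close>
definition JM1 :: "'l set \<Rightarrow> ('l \<Rightarrow> 'l \<Rightarrow> 'l) \<Rightarrow> 'l \<Rightarrow> ('l \<Rightarrow> 'l) set" where
  "JM1 L j one = {f. f \<in> extensional L \<and> (\<forall>x\<in>L. f x \<in> L) \<and>
     (\<forall>x\<in>L. \<forall>y\<in>L. f (j x y) = j (f x) (f y)) \<and> f one = one}"

definition fjoin :: "'l set \<Rightarrow> ('l \<Rightarrow> 'l \<Rightarrow> 'l) \<Rightarrow> ('l \<Rightarrow> 'l) \<Rightarrow> ('l \<Rightarrow> 'l) \<Rightarrow> ('l \<Rightarrow> 'l)" where
  "fjoin L j f g = restrict (\<lambda>x. j (f x) (g x)) L"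

definition fcomp :: "'l set \<Rightarrow> ('l \<Rightarrow> 'l) \<Rightarrow> ('l \<Rightarrow> 'l) \<Rightarrow> ('l \<Rightarrow> 'l)" where
  "fcomp L f g = restrict (\<lambda>x. f (g x)) L"

definition fab :: "'l set \<Rightarrow> ('l \<Rightarrow> 'l \<Rightarrow> 'l) \<Rightarrow> 'l \<Rightarrow> 'l \<Rightarrow> 'l \<Rightarrow> ('l \<Rightarrow> 'l)" where
  "fab L j one a b = restrict (\<lambda>x. if sl_le j x a then b else one) L"

definition admissible :: "'l set \<Rightarrow> ('l \<Rightarrow> 'l \<Rightarrow> 'l) \<Rightarrow> 'l \<Rightarrow> ('l \<Rightarrow> 'l) set \<Rightarrow> bool" where
  "admissible L j one R \<longleftrightarrow>
     fin_join_sl L j one \<and> (\<exists>x\<in>L. x \<noteq> one) \<and> sl_star L j \<and>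
     \<comment> \<open>R is a subsemiring of JM_1(L)\<close>
     R \<subseteq> JM1 L j one \<and> R \<noteq> {} \<and>
     (\<forall>f\<in>R. \<forall>g\<in>R. fjoin L j f g \<in> R \<and> fcomp L f g \<in> R) \<and>
     \<comment> \<open>(i)\<close>
     (\<forall>a\<in>L - {one}. \<forall>b\<in>L. fab L j one a b \<in> R) \<and>
     \<comment> \<open>(ii)\<close>
     (\<forall>f\<in>R. \<exists>a\<in>L - {one}. \<exists>b\<in>L. \<forall>x\<in>L. sl_le j (fab L j one a b x) (f x))"

end

theory Submission
  imports Defs
begin

lemma ext_eqI:
  assumes "f \<in> extensional A" "g \<in> extensional A" "\<And>x. x \<in> A \<Longrightarrow> f x = g x"
  shows "f = g"
  using assms extensionalityI by metis

locale P1 =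
  fixes L :: "'l set" and j one and R :: "('l \<Rightarrow> 'l) set"
  assumes adm: "admissible L j one R"
begin

lemma fsl: "fin_join_sl L j one" using adm by (simp add: admissible_def)
lemma finL: "finite L" and one_in: "one \<in> L"
  and jcl: "\<And>x y. x \<in> L \<Longrightarrow> y \<in> L \<Longrightarrow> j x y \<in> L"
  and jcomm: "\<And>x y. x \<in> L \<Longrightarrow> y \<in> L \<Longrightarrow> j x y = j y x"
  and jidem: "\<And>x. x \<in> L \<Longrightarrow> j x x = x"
  and jassoc: "\<And>x y z. x \<in> L \<Longrightarrow> y \<in> L \<Longrightarrow> z \<in> L \<Longrightarrow> j (j x y) z = j x (j y z)"
  and jone: "\<And>x. x \<in> L \<Longrightarrow> j x one = one"
  using fsl unfolding fin_join_sl_def by auto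

lemma nontriv: "\<exists>x\<in>L. x \<noteq> one" using adm by (simp add: admissible_def)
lemma star: "sl_star L j" using adm by (simp add: admissible_def)
lemma RJ: "R \<subseteq> JM1 L j one" using adm by (simp add: admissible_def)
lemma Rne: "R \<noteq> {}" using adm by (simp add: admissible_def)
lemma Rjoin: "f \<in> R \<Longrightarrow> g \<in> R \<Longrightarrow> fjoin L j f g \<in> R"
  and Rcomp: "f \<in> R \<Longrightarrow> g \<in> R \<Longrightarrow> fcomp L f g \<in> R"
  using adm by (auto simp: admissible_def)
lemma Rfab: "a \<in> L \<Longrightarrow> a \<noteq> one \<Longrightarrow> b \<in> L \<Longrightarrow> fab L j one a b \<in> R"
  using adm by (auto simp: admissible_def)
lemma Rii: "f \<in> R \<Longrightarrow> \<exists>a\<in>L - {one}. \<exists>b\<in>L. \<forall>x\<in>L. sl_le j (fab L j one a b x) (f x)"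
  using adm by (auto simp: admissible_def)

lemma Rext: "f \<in> R \<Longrightarrow> f \<in> extensional L" using RJ by (auto simp: JM1_def)
lemma Rcl: "f \<in> R \<Longrightarrow> x \<in> L \<Longrightarrow> f x \<in> L" using RJ by (auto simp: JM1_def)
lemma Rhom: "f \<in> R \<Longrightarrow> x \<in> L \<Longrightarrow> y \<in> L \<Longrightarrow> f (j x y) = j (f x) (f y)"
  using RJ by (auto simp: JM1_def)
lemma Rone: "f \<in> R \<Longrightarrow> f one = one" using RJ by (auto simp: JM1_def)

lemma fjoin_ap: "x \<in> L \<Longrightarrow> fjoin L j f g x = j (f x) (g x)" by (simp add: fjoin_def)
lemma fcomp_ap: "x \<in> L \<Longrightarrow> fcomp L f g x = f (g x)" by (simp add: fcomp_def)
lemma fab_ap: "x \<in> L \<Longrightarrow> fab L j one a b x = (if sl_le j x a then b else one)" by (simp add: fab_def)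
lemma fjoin_ext: "fjoin L j f g \<in> extensional L" by (simp add: fjoin_def)
lemma fcomp_ext: "fcomp L f g \<in> extensional L" by (simp add: fcomp_def)
lemma fab_ext: "fab L j one a b \<in> extensional L" by (simp add: fab_def)

definition gam where "gam = restrict (\<lambda>_. one) L"

lemma fab_one: "fab L j one a one = gam"
  unfolding fab_def gam_def by (rule restrict_ext) simp

lemma gamR: "gam \<in> R"
  using nontriv Rfab one_in fab_one by metis

lemma gam_ap: "x \<in> L \<Longrightarrow> gam x = one" by (simp add: gam_def)

lemma finR: "finite R"
proof -
  have "R \<subseteq> PiE L (\<lambda>_. L)" using Rext Rcl by (auto simp: PiE_def)
  moreover have "finite (PiE L (\<lambda>_. L))" using finL by (simp add: finite_PiE)
  ultimately show ?thesis using finite_subset by blast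
qed

lemma semiR: "semiring R (fjoin L j) (fcomp L)"
  unfolding semiring_def
proof (intro conjI ballI)
  show "R \<noteq> {}" by (rule Rne)
next
  fix x y assume "x \<in> R" "y \<in> R"
  then show "fjoin L j x y \<in> R" "fcomp L x y \<in> R" by (auto intro: Rjoin Rcomp)
next
  fix x y assume "x \<in> R" "y \<in> R"
  then show "fjoin L j x y = fjoin L j y x"
    by (intro ext_eqI[OF fjoin_ext fjoin_ext]) (simp add: fjoin_ap jcomm Rcl)
next
  fix x y z assume xyz: "x \<in> R" "y \<in> R" "z \<in> R"
  show "fjoin L j (fjoin L j x y) z = fjoin L j x (fjoin L j y z)"
    by (intro ext_eqI[OF fjoin_ext fjoin_ext]) (simp add: fjoin_ap jassoc Rcl xyz)
  show "fcomp L (fcomp L x y) z = fcomp L x (fcomp L y z)"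
    by (intro ext_eqI[OF fcomp_ext fcomp_ext]) (simp add: fcomp_ap Rcl xyz)
  show "fcomp L x (fjoin L j y z) = fjoin L j (fcomp L x y) (fcomp L x z)"
    by (intro ext_eqI[OF fcomp_ext fjoin_ext]) (simp add: fcomp_ap fjoin_ap Rcl Rhom xyz)
  show "fcomp L (fjoin L j x y) z = fjoin L j (fcomp L x z) (fcomp L y z)"
    by (intro ext_eqI[OF fcomp_ext fjoin_ext]) (simp add: fcomp_ap fjoin_ap Rcl xyz)
qed

lemma le_one: "x \<in> L \<Longrightarrow> sl_le j x one" by (simp add: sl_le_def jone)
lemma le_refl: "x \<in> L \<Longrightarrow> sl_le j x x" by (simp add: sl_le_def jidem)
lemma le_antisym: "x \<in> L \<Longrightarrow> y \<in> L \<Longrightarrow> sl_le j x y \<Longrightarrow> sl_le j y x \<Longrightarrow> x = y"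
  by (metis jcomm sl_le_def)

lemma fcomp_fab: "f \<in> R \<Longrightarrow> fcomp L f (fab L j one c p) = fab L j one c (f p)"
  by (intro ext_eqI[OF fcomp_ext fab_ext]) (simp add: fcomp_ap fab_ap Rone)

lemma fjoin_gam: "f \<in> R \<Longrightarrow> fjoin L j f gam = gam"
  by (intro ext_eqI[OF fjoin_ext]) (auto simp: fjoin_ap gam_ap jone Rcl gam_def)

lemma simpleR: "simple_semiring R (fjoin L j) (fcomp L)"
  unfolding simple_semiring_def
proof (intro conjI allI impI semiR)
  fix \<theta> assume cg: "semiring_cong R (fjoin L j) (fcomp L) \<theta>"
  have eq: "equiv R \<theta>" using cg by (simp add: semiring_cong_def)
  have cmp: "\<And>a b c d. (a,b) \<in> \<theta> \<Longrightarrow> (c,d) \<in> \<theta> \<Longrightarrow>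
      (fjoin L j a c, fjoin L j b d) \<in> \<theta> \<and> (fcomp L a c, fcomp L b d) \<in> \<theta>"
    using cg by (simp add: semiring_cong_def)
  have sub: "\<theta> \<subseteq> R \<times> R" using eq by (simp add: equiv_def)
  have rfl: "\<And>x. x \<in> R \<Longrightarrow> (x,x) \<in> \<theta>" using eq by (simp add: equiv_def refl_on_def)
  have sy: "\<And>x y. (x,y) \<in> \<theta> \<Longrightarrow> (y,x) \<in> \<theta>" using eq by (auto simp: equiv_def sym_def)
  have tr: "\<And>x y z. (x,y) \<in> \<theta> \<Longrightarrow> (y,z) \<in> \<theta> \<Longrightarrow> (x,z) \<in> \<theta>" using eq
    by (auto simp: equiv_def elim: transE)
  show "\<theta> = Id_on R \<or> \<theta> = R \<times> R"
  proof (cases "\<theta> \<subseteq> Id_on R")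
    case True
    then have "\<theta> = Id_on R" using rfl by (auto simp: Id_on_def)
    then show ?thesis by simp
  next
    case False
    then obtain f h where fh: "(f,h) \<in> \<theta>" "f \<noteq> h" using sub by (auto simp: Id_on_def)
    have fR: "f \<in> R" and hR: "h \<in> R" using fh sub by auto
    obtain x where x: "x \<in> L" "f x \<noteq> h x"
      using fh fR hR Rext ext_eqI by metis
    have "\<exists>f h. (f,h) \<in> \<theta> \<and> \<not> sl_le j (f x) (h x)"
    proof (cases "sl_le j (f x) (h x)")
      case True
      then have "\<not> sl_le j (h x) (f x)" using le_antisym x Rcl fR hR by blast
      then show ?thesis using sy[OF fh(1)] by blast
    qed (use fh in blast)
    then obtain f1 h1 where f1: "(f1,h1) \<in> \<theta>" "\<not> sl_le j (f1 x) (h1 x)" by blast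
    have f1R: "f1 \<in> R" and h1R: "h1 \<in> R" using f1 sub by auto
    define p where "p = f1 x"
    define q where "q = h1 x"
    have pL: "p \<in> L" and qL: "q \<in> L" using p_def q_def x Rcl f1R h1R by auto
    have npq: "\<not> sl_le j p q" using f1 p_def q_def by simp
    have qne: "q \<noteq> one" using npq le_one pL by blast
    obtain c0 where c0: "c0 \<in> L" "c0 \<noteq> one" using nontriv by blast
    have key: "(fab L j one c b, gam) \<in> \<theta>" if c: "c \<in> L" "c \<noteq> one" and b: "b \<in> L" for c b
    proof -
      have kR: "fab L j one c x \<in> R" using Rfab c x by simp
      have "(fcomp L f1 (fab L j one c x), fcomp L h1 (fab L j one c x)) \<in> \<theta>"
        using cmp[OF f1(1) rfl[OF kR]] by simp
      then have 1: "(fab L j one c p, fab L j one c q) \<in> \<theta>"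
        using fcomp_fab f1R h1R p_def q_def by simp
      have qbR: "fab L j one q b \<in> R" using Rfab qL qne b by simp
      have "(fcomp L (fab L j one q b) (fab L j one c p), fcomp L (fab L j one q b) (fab L j one c q)) \<in> \<theta>"
        using cmp[OF rfl[OF qbR] 1] by simp
      then have "(fab L j one c (fab L j one q b p), fab L j one c (fab L j one q b q)) \<in> \<theta>"
        using fcomp_fab[OF qbR] by simp
      then have "(fab L j one c one, fab L j one c b) \<in> \<theta>"
        using fab_ap pL qL npq le_refl by simp
      then show ?thesis using fab_one sy by simp
    qed
    have "(g, gam) \<in> \<theta>" if gR: "g \<in> R" for g
    proof -
      obtain a b where ab: "a \<in> L" "a \<noteq> one" "b \<in> L"
        "\<forall>y\<in>L. sl_le j (fab L j one a b y) (g y)" using Rii[OF gR] by blast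
      have abR: "fab L j one a b \<in> R" using Rfab ab by simp
      have e1: "fjoin L j (fab L j one a b) g = g"
        using ab(4) by (intro ext_eqI[OF fjoin_ext Rext[OF gR]]) (simp add: fjoin_ap sl_le_def)
      have e2: "fjoin L j gam g = gam"
        by (intro ext_eqI[OF fjoin_ext]) (auto simp: fjoin_ap gam_def, metis jcomm jone one_in Rcl gR)
      have "(fjoin L j (fab L j one a b) g, fjoin L j gam g) \<in> \<theta>"
        using cmp[OF key[OF ab(1,2,3)] rfl[OF gR]] by simp
      then show ?thesis using e1 e2 by simp
    qed
    then have "R \<times> R \<subseteq> \<theta>" using tr sy by blast
    then show ?thesis using sub by blast
  qed
qed

lemma idemR: "add_idempotent R (fjoin L j)"
  unfolding add_idempotent_def
  by (auto intro!: ext_eqI[OF fjoin_ext Rext] simp: fjoin_ap jidem Rcl)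

lemma absR: "has_absorbing_greatest R (fjoin L j) (fcomp L)"
  unfolding has_absorbing_greatest_def
proof (intro bexI[OF _ gamR] conjI ballI)
  fix x assume "x \<in> R" then show "fjoin L j x gam = gam" by (rule fjoin_gam)
next
  fix s assume sR: "s \<in> R"
  show "fcomp L s gam = gam"
    by (intro ext_eqI[OF fcomp_ext]) (auto simp: fcomp_ap gam_ap Rone[OF sR] gam_def)
  show "fcomp L gam s = gam"
    by (intro ext_eqI[OF fcomp_ext]) (auto simp: fcomp_ap gam_def Rcl[OF sR])
qed

lemma modL: "semimodule R (fjoin L j) (fcomp L) L j (\<lambda>f x. f x)"
  unfolding semimodule_def
  using jassoc by (auto simp: semiR jcl jcomm Rcl fcomp_ap fjoin_ap Rhom)

lemma not_qt: "\<not> quasitrivial R L (\<lambda>f x. f x)"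
proof -
  obtain a where a: "a \<in> L" "a \<noteq> one" using nontriv by blast
  have "fab L j one a a a = a" using a le_refl fab_ap by simp
  moreover have "gam a = one" using a gam_ap by simp
  ultimately show ?thesis unfolding quasitrivial_def using a Rfab gamR by metis
qed

lemma irrL: "irreducible_smod R (fjoin L j) (fcomp L) L j (\<lambda>f x. f x)"
  unfolding irreducible_smod_def sub_irreducible_def quot_irreducible_def
proof (intro conjI modL not_qt allI impI)
  fix N assume N: "subsemimodule R L j (\<lambda>f x. f x) N \<and> N \<noteq> L"
  have NL: "N \<subseteq> L" and Ncl: "\<And>r x. r \<in> R \<Longrightarrow> x \<in> N \<Longrightarrow> r x \<in> N"
    using N by (auto simp: subsemimodule_def)
  have "N \<subseteq> {one}"
  proof
    fix x assume xN: "x \<in> N"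
    show "x \<in> {one}"
    proof (rule ccontr)
      assume "x \<notin> {one}"
      then have xo: "x \<noteq> one" by simp
      have "L \<subseteq> N"
      proof
        fix b assume b: "b \<in> L"
        have "fab L j one x b x \<in> N" using Ncl[OF Rfab[OF _ xo b] xN] xN NL by auto
        then show "b \<in> N" using fab_ap le_refl xN NL by auto
      qed
      then show False using N NL by auto
    qed
  qed
  then show "id_quasitrivial R N (\<lambda>f x. f x)"
    unfolding id_quasitrivial_def using Rone by auto
next
  fix \<theta> assume cg: "smod_cong R L j (\<lambda>f x. f x) \<theta>"
  have eq: "equiv L \<theta>" using cg by (simp add: smod_cong_def)
  have act: "\<And>r a b. r \<in> R \<Longrightarrow> (a,b) \<in> \<theta> \<Longrightarrow> (r a, r b) \<in> \<theta>"
    using cg by (simp add: smod_cong_def)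
  have sub: "\<theta> \<subseteq> L \<times> L" using eq by (simp add: equiv_def)
  have rfl: "\<And>x. x \<in> L \<Longrightarrow> (x,x) \<in> \<theta>" using eq by (simp add: equiv_def refl_on_def)
  have sy: "\<And>x y. (x,y) \<in> \<theta> \<Longrightarrow> (y,x) \<in> \<theta>" using eq by (auto simp: equiv_def sym_def)
  have tr: "\<And>x y z. (x,y) \<in> \<theta> \<Longrightarrow> (y,z) \<in> \<theta> \<Longrightarrow> (x,z) \<in> \<theta>" using eq
    by (auto simp: equiv_def elim: transE)
  show "\<theta> = Id_on L \<or> \<theta> = L \<times> L"
  proof (cases "\<theta> \<subseteq> Id_on L")
    case True
    then have "\<theta> = Id_on L" using rfl by (auto simp: Id_on_def)
    then show ?thesis by simp
  next
    case False
    then obtain x y where xy: "(x,y) \<in> \<theta>" "x \<noteq> y" using sub by (auto simp: Id_on_def)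
    have xL: "x \<in> L" and yL: "y \<in> L" using xy sub by auto
    have "\<exists>x y. (x,y) \<in> \<theta> \<and> \<not> sl_le j x y"
    proof (cases "sl_le j x y")
      case True
      then have "\<not> sl_le j y x" using le_antisym xL yL xy by blast
      then show ?thesis using sy[OF xy(1)] by blast
    qed (use xy in blast)
    then obtain p q where pq: "(p,q) \<in> \<theta>" "\<not> sl_le j p q" by blast
    have pL: "p \<in> L" and qL: "q \<in> L" using pq sub by auto
    have qo: "q \<noteq> one" using pq le_one pL by blast
    have "(b, one) \<in> \<theta>" if b: "b \<in> L" for b
    proof -
      have "(fab L j one q b p, fab L j one q b q) \<in> \<theta>" using act[OF Rfab[OF qL qo b] pq(1)] .
      then show ?thesis using fab_ap pL qL pq(2) le_refl sy by simp
    qed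
    then have "L \<times> L \<subseteq> \<theta>" using tr sy by blast
    then show ?thesis using sub by blast
  qed
qed

lemma idemL: "smod_idempotent L j" by (simp add: smod_idempotent_def jidem)

end

lemma part1:
  fixes L :: "'l set"
  assumes "admissible L j one R"
  shows "finite R \<and> simple_semiring R (fjoin L j) (fcomp L) \<and>
             add_idempotent R (fjoin L j) \<and>
             has_absorbing_greatest R (fjoin L j) (fcomp L) \<and>
             (\<exists>(M :: 'l set) madd act.
                semimodule R (fjoin L j) (fcomp L) M madd act \<and>
                smod_idempotent M madd \<and>
                irreducible_smod R (fjoin L j) (fcomp L) M madd act \<and>
                sl_star M madd)"
proof -
  interpret P1 L j one R by (rule P1.intro[OF assms])
  show ?thesis using finR simpleR idemR absR modL idemL irrL star by blast
qed



definition ker :: "'a set \<Rightarrow> ('a \<Rightarrow> 'b) \<Rightarrow> ('a \<times> 'a) set" where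
  "ker A f = {(x,y). x \<in> A \<and> y \<in> A \<and> f x = f y}"

lemma ker_equiv: "equiv A (ker A f)"
  unfolding ker_def equiv_def refl_on_def sym_def trans_def by auto

lemma ker_Id: "ker A f = Id_on A \<Longrightarrow> x \<in> A \<Longrightarrow> y \<in> A \<Longrightarrow> f x = f y \<Longrightarrow> x = y"
  unfolding ker_def Id_on_def by blast

lemma ker_all: "ker A f = A \<times> A \<Longrightarrow> x \<in> A \<Longrightarrow> y \<in> A \<Longrightarrow> f x = f y"
  unfolding ker_def by blast

locale P2 =
  fixes S :: "'s set" and add mul and M :: "'m set" and madd act and g u ob
  assumes finS: "finite S"
    and simple: "simple_semiring S add mul"
    and modM: "semimodule S add mul M madd act"
    and idM: "smod_idempotent M madd"
    and irr: "irreducible_smod S add mul M madd act"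
    and finM: "finite M"
    and gM: "g \<in> M" and gtop: "\<And>x. x \<in> M \<Longrightarrow> madd x g = g"
    and uM: "u \<in> M" and ustar: "\<And>x. x \<in> M \<Longrightarrow> x \<noteq> g \<Longrightarrow> g \<noteq> madd u x"
    and oS: "ob \<in> S" and otop: "\<And>x. x \<in> S \<Longrightarrow> add x ob = ob"
    and oabs: "\<And>s. s \<in> S \<Longrightarrow> mul s ob = ob \<and> mul ob s = ob"
begin

abbreviation le where "le x y \<equiv> madd x y = y"

lemma semS: "semiring S add mul" using modM by (simp add: semimodule_def)
lemma Sne: "S \<noteq> {}" using semS by (simp add: semiring_def)
lemma addS: "x \<in> S \<Longrightarrow> y \<in> S \<Longrightarrow> add x y \<in> S"
  and mulS: "x \<in> S \<Longrightarrow> y \<in> S \<Longrightarrow> mul x y \<in> S"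
  and add_comm: "x \<in> S \<Longrightarrow> y \<in> S \<Longrightarrow> add x y = add y x"
  using semS by (auto simp: semiring_def)

lemma mcl: "x \<in> M \<Longrightarrow> y \<in> M \<Longrightarrow> madd x y \<in> M"
  and mcomm: "x \<in> M \<Longrightarrow> y \<in> M \<Longrightarrow> madd x y = madd y x"
  and massoc: "x \<in> M \<Longrightarrow> y \<in> M \<Longrightarrow> z \<in> M \<Longrightarrow> madd (madd x y) z = madd x (madd y z)"
  and acl: "r \<in> S \<Longrightarrow> x \<in> M \<Longrightarrow> act r x \<in> M"
  and act_mul: "r \<in> S \<Longrightarrow> s \<in> S \<Longrightarrow> x \<in> M \<Longrightarrow> act r (act s x) = act (mul r s) x"
  and act_add: "r \<in> S \<Longrightarrow> s \<in> S \<Longrightarrow> x \<in> M \<Longrightarrow> act (add r s) x = madd (act r x) (act s x)"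
  and act_madd: "r \<in> S \<Longrightarrow> x \<in> M \<Longrightarrow> y \<in> M \<Longrightarrow> act r (madd x y) = madd (act r x) (act r y)"
  using modM by (auto simp: semimodule_def)

lemma midem: "x \<in> M \<Longrightarrow> madd x x = x" using idM by (simp add: smod_idempotent_def)

lemma le_refl: "x \<in> M \<Longrightarrow> le x x" by (rule midem)
lemma le_antisym: "x \<in> M \<Longrightarrow> y \<in> M \<Longrightarrow> le x y \<Longrightarrow> le y x \<Longrightarrow> x = y"
  using mcomm by metis
lemma le_trans: "x \<in> M \<Longrightarrow> y \<in> M \<Longrightarrow> z \<in> M \<Longrightarrow> le x y \<Longrightarrow> le y z \<Longrightarrow> le x z"
  using massoc[of x y z] by simp
lemma le_top: "x \<in> M \<Longrightarrow> le x g" by (rule gtop)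
lemma top_le: "x \<in> M \<Longrightarrow> le g x \<Longrightarrow> x = g" using gtop mcomm gM by metis
lemma le_madd1: "x \<in> M \<Longrightarrow> y \<in> M \<Longrightarrow> le x (madd x y)"
proof -
  assume h: "x \<in> M" "y \<in> M"
  have "madd x (madd x y) = madd (madd x x) y" using massoc[OF h(1) h(1) h(2)] by simp
  then show ?thesis using midem h by simp
qed
lemma le_madd2: "x \<in> M \<Longrightarrow> y \<in> M \<Longrightarrow> le y (madd x y)"
  using le_madd1 mcomm by metis
lemma join_le: "x \<in> M \<Longrightarrow> y \<in> M \<Longrightarrow> z \<in> M \<Longrightarrow> le (madd x y) z \<longleftrightarrow> le x z \<and> le y z"
proof
  assume xyz: "x \<in> M" "y \<in> M" "z \<in> M" and h: "le (madd x y) z"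
  show "le x z \<and> le y z"
    using le_trans[OF xyz(1) mcl[OF xyz(1,2)] xyz(3) le_madd1[OF xyz(1,2)] h]
          le_trans[OF xyz(2) mcl[OF xyz(1,2)] xyz(3) le_madd2[OF xyz(1,2)] h] by simp
next
  assume xyz: "x \<in> M" "y \<in> M" "z \<in> M" and h: "le x z \<and> le y z"
  then show "le (madd x y) z" using massoc[OF xyz] by simp
qed
lemma act_mono: "s \<in> S \<Longrightarrow> x \<in> M \<Longrightarrow> y \<in> M \<Longrightarrow> le x y \<Longrightarrow> le (act s x) (act s y)"
  using act_madd[of s x y] by simp

lemma nqt: "\<not> quasitrivial S M act"
  using irr by (simp add: irreducible_smod_def sub_irreducible_def)

lemma quot: "smod_cong S M madd act \<theta> \<Longrightarrow> \<theta> = Id_on M \<or> \<theta> = M \<times> M"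
  using irr by (simp add: irreducible_smod_def quot_irreducible_def)

lemma subirr: "subsemimodule S M madd act N \<Longrightarrow> N \<noteq> M \<Longrightarrow> id_quasitrivial S N act"
  using irr by (simp add: irreducible_smod_def sub_irreducible_def)

lemma simp_cong: "semiring_cong S add mul \<theta> \<Longrightarrow> \<theta> = Id_on S \<or> \<theta> = S \<times> S"
  using simple by (simp add: simple_semiring_def)

lemma ker_smod_cong:
  assumes j: "\<And>a b c d. a \<in> M \<Longrightarrow> b \<in> M \<Longrightarrow> c \<in> M \<Longrightarrow> d \<in> M \<Longrightarrow> f a = f b \<Longrightarrow> f c = f d \<Longrightarrow>
      f (madd a c) = f (madd b d)"
    and ac: "\<And>r a b. r \<in> S \<Longrightarrow> a \<in> M \<Longrightarrow> b \<in> M \<Longrightarrow> f a = f b \<Longrightarrow> f (act r a) = f (act r b)"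
  shows "smod_cong S M madd act (ker M f)"
  unfolding smod_cong_def using ker_equiv j ac mcl acl by (auto simp: ker_def)

lemma o_const0: "\<exists>c\<in>M. \<forall>x\<in>M. act ob x = c"
proof -
  have cg: "smod_cong S M madd act (ker M (act ob))"
  proof (rule ker_smod_cong)
    fix a b c d assume "a \<in> M" "b \<in> M" "c \<in> M" "d \<in> M" "act ob a = act ob b" "act ob c = act ob d"
    then show "act ob (madd a c) = act ob (madd b d)" using act_madd oS by simp
  next
    fix r a b assume "r \<in> S" "a \<in> M" "b \<in> M" "act ob a = act ob b"
    then show "act ob (act r a) = act ob (act r b)" using act_mul oS oabs by simp
  qed
  show ?thesis
  proof (cases "ker M (act ob) = Id_on M")
    case True
    have "act r x = x" if "r \<in> S" "x \<in> M" for r x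
      using ker_Id[OF True] that acl act_mul oS oabs by simp
    then have "quasitrivial S M act" by (simp add: quasitrivial_def)
    then show ?thesis using nqt by simp
  next
    case False
    then have "ker M (act ob) = M \<times> M" using quot[OF cg] by simp
    then show ?thesis using ker_all gM acl oS by metis
  qed
qed

lemma le_o: "s \<in> S \<Longrightarrow> x \<in> M \<Longrightarrow> le (act s x) (act ob x)"
  using act_add[OF _ oS] otop by metis

lemma o_const: assumes xM: "x \<in> M" shows "act ob x = g"
proof -
  obtain c where c: "c \<in> M" "\<And>x. x \<in> M \<Longrightarrow> act ob x = c" using o_const0 by blast
  have below: "le (act s x) c" if "s \<in> S" "x \<in> M" for s x using le_o that c by metis
  have cg: "smod_cong S M madd act (ker M (\<lambda>x. madd x c))"
  proof (rule ker_smod_cong)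
    fix a b e d assume h: "a \<in> M" "b \<in> M" "e \<in> M" "d \<in> M" "madd a c = madd b c" "madd e c = madd d c"
    have "madd (madd a e) c = madd (madd a c) (madd e c)"
      using h c by (metis massoc mcomm midem mcl)
    also have "\<dots> = madd (madd b c) (madd d c)" using h by simp
    also have "\<dots> = madd (madd b d) c"
      using h c by (metis massoc mcomm midem mcl)
    finally show "madd (madd a e) c = madd (madd b d) c" .
  next
    fix r a b assume "r \<in> S" "a \<in> M" "b \<in> M"
    then show "madd (act r a) c = madd (act r b) c" using below by simp
  qed
  have "c = g"
  proof (cases "ker M (\<lambda>x. madd x c) = Id_on M")
    case True
    have "act r x = c" if "r \<in> S" "x \<in> M" for r x
      using ker_Id[OF True, of "act r x" c] below[OF that] that c acl midem by simp
    then have "quasitrivial S M act" by (simp add: quasitrivial_def)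
    then show ?thesis using nqt by simp
  next
    case False
    then have "ker M (\<lambda>x. madd x c) = M \<times> M" using quot[OF cg] by simp
    then have "madd c c = madd g c" using ker_all c gM by metis
    then show ?thesis using midem c gtop mcomm gM by metis
  qed
  then show ?thesis using c xM by simp
qed

lemma act_g: "s \<in> S \<Longrightarrow> act s g = g"
  by (metis act_mul gM o_const oS oabs)

lemma nontriv: "\<exists>x\<in>M. x \<noteq> g"
proof (rule ccontr)
  assume "\<not> ?thesis"
  then have "M \<subseteq> {g}" by auto
  then have "quasitrivial S M act" using act_g by (auto simp: quasitrivial_def)
  then show False using nqt by simp
qed

lemma u_ne: "u \<noteq> g"
  using nontriv ustar gtop mcomm gM by metis

lemma fix_g: "y \<in> M \<Longrightarrow> act ob y = y \<Longrightarrow> y = g" using o_const by simp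

lemma Zg: assumes x: "x \<in> M" "\<And>s. s \<in> S \<Longrightarrow> act s x = g" shows "x = g"
proof -
  define Z where "Z = {x\<in>M. \<forall>s\<in>S. act s x = g}"
  have sub: "subsemimodule S M madd act Z"
    unfolding subsemimodule_def
  proof (intro conjI ballI)
    show "Z \<noteq> {}" using gM act_g by (auto simp: Z_def)
    show "Z \<subseteq> M" by (auto simp: Z_def)
  next
    fix x y assume "x \<in> Z" "y \<in> Z"
    then show "madd x y \<in> Z" using mcl act_madd gtop gM by (simp add: Z_def)
  next
    fix r x assume r: "r \<in> S" and "x \<in> Z"
    then have x: "x \<in> M" "\<And>s. s \<in> S \<Longrightarrow> act s x = g" by (auto simp: Z_def)
    have "act s (act r x) = g" if "s \<in> S" for s using act_mul[OF that r x(1)] x mulS[OF that r] by simp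
    then show "act r x \<in> Z" using acl r x gM by (simp add: Z_def)
  qed
  show ?thesis
  proof (cases "Z = M")
    case True
    then have "\<forall>x\<in>M. \<forall>s\<in>S. act s x = g" by (auto simp: Z_def)
    then have "quasitrivial S M act" by (auto simp: quasitrivial_def)
    then show ?thesis using nqt by simp
  next
    case False
    then have "id_quasitrivial S Z act" using subirr sub by simp
    then have "act ob x = x" using x oS by (auto simp: id_quasitrivial_def Z_def)
    then show ?thesis using fix_g x by simp
  qed
qed

lemma transM: assumes x: "x \<in> M" "x \<noteq> g" and y: "y \<in> M" shows "\<exists>s\<in>S. act s x = y"
proof -
  define Sx where "Sx = (\<lambda>s. act s x) ` S"
  have sub: "subsemimodule S M madd act Sx"
    unfolding subsemimodule_def Sx_def
  proof (intro conjI ballI)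
    show "(\<lambda>s. act s x) ` S \<noteq> {}" using Sne by simp
    show "(\<lambda>s. act s x) ` S \<subseteq> M" using acl x by auto
  next
    fix a b assume "a \<in> (\<lambda>s. act s x) ` S" "b \<in> (\<lambda>s. act s x) ` S"
    then obtain s t where "s \<in> S" "t \<in> S" "a = act s x" "b = act t x" by auto
    then show "madd a b \<in> (\<lambda>s. act s x) ` S" using act_add[of s t x] x addS[of s t]
      by (metis image_eqI)
  next
    fix r a assume "r \<in> S" "a \<in> (\<lambda>s. act s x) ` S"
    then obtain s where "s \<in> S" "a = act s x" by auto
    then show "act r a \<in> (\<lambda>s. act s x) ` S" using act_mul[of r s x] x mulS \<open>r \<in> S\<close> by auto
  qed
  show ?thesis
  proof (cases "Sx = M")
    case True then show ?thesis using y Sx_def by auto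
  next
    case False
    then have iq: "id_quasitrivial S Sx act" using subirr sub by simp
    have "act s x = g" if "s \<in> S" for s
    proof -
      have "act ob (act s x) = act s x" using iq that oS by (auto simp: id_quasitrivial_def Sx_def)
      then show ?thesis using fix_g acl that x by simp
    qed
    then show ?thesis using Zg x by blast
  qed
qed

lemma separate:
  assumes a: "a \<in> M" "a \<noteq> g" and z: "z \<in> M" "z' \<in> M" "z \<noteq> z'"
  shows "\<exists>s\<in>S. \<not> (le (act s z) a \<longleftrightarrow> le (act s z') a)"
proof -
  define f where "f z = {s\<in>S. le (act s z) a}" for z
  have cg: "smod_cong S M madd act (ker M f)"
  proof (rule ker_smod_cong)
    fix x y c d assume h: "x \<in> M" "y \<in> M" "c \<in> M" "d \<in> M" "f x = f y" "f c = f d"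
    have fm: "f (madd x c) = f x \<inter> f c" if xc: "x \<in> M" "c \<in> M" for x c
    proof -
      have "le (act s (madd x c)) a \<longleftrightarrow> le (act s x) a \<and> le (act s c) a" if s: "s \<in> S" for s
        using act_madd[OF s xc] join_le[OF acl[OF s xc(1)] acl[OF s xc(2)] a(1)] by simp
      then show ?thesis unfolding f_def by blast
    qed
    show "f (madd x c) = f (madd y d)" using fm[OF h(1,3)] fm[OF h(2,4)] h(5,6) by simp
  next
    fix r x y assume h: "r \<in> S" "x \<in> M" "y \<in> M" "f x = f y"
    have e: "f (act r x) = {s \<in> S. mul s r \<in> f x}" if x: "x \<in> M" for x
    proof -
      have "le (act s (act r x)) a \<longleftrightarrow> mul s r \<in> f x" if s: "s \<in> S" for s
        using act_mul[OF s h(1) x] mulS[OF s h(1)] unfolding f_def by simp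
      then show ?thesis unfolding f_def by blast
    qed
    show "f (act r x) = f (act r y)" using e h by simp
  qed
  obtain s where s: "s \<in> S" "act s a = a" using transM[OF a(1) a(2) a(1)] by blast
  have "f a \<noteq> f g"
  proof
    assume "f a = f g"
    moreover have "s \<in> f a" using s a by (simp add: f_def le_refl)
    ultimately have "s \<in> f g" by simp
    then have "le g a" using act_g[OF s(1)] by (simp add: f_def)
    then show False using top_le a by simp
  qed
  then have "ker M f \<noteq> M \<times> M" using a gM by (auto simp: ker_def)
  then have "ker M f = Id_on M" using quot[OF cg] by simp
  then have "f z \<noteq> f z'" using ker_Id[of M f z z'] z by blast
  then show ?thesis unfolding f_def by blast
qed

lemma dual_trans:
  assumes a: "a \<in> M" "a \<noteq> g" and a': "a' \<in> M" "a' \<noteq> g"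
  shows "\<exists>s\<in>S. \<forall>x\<in>M. le (act s x) a \<longleftrightarrow> le x a'"
proof -
  have one: "\<exists>s\<in>S. le (act s a') a \<and> \<not> le (act s x) a" if x: "x \<in> M" "\<not> le x a'" for x
  proof -
    have ne: "a' \<noteq> madd a' x" using x a' mcomm by metis
    obtain s where s: "s \<in> S" "\<not> (le (act s a') a \<longleftrightarrow> le (act s (madd a' x)) a)"
      using separate[OF a a'(1) mcl[OF a'(1) x(1)] ne] by blast
    have "le (act s (madd a' x)) a \<longleftrightarrow> le (act s a') a \<and> le (act s x) a"
      using act_madd join_le s a a' x acl by simp
    then show ?thesis using s by blast
  qed
  have fin: "\<exists>s\<in>S. le (act s a') a \<and> (\<forall>x\<in>X. \<not> le (act s x) a)"
    if "finite X" "X \<subseteq> {x\<in>M. \<not> le x a'}" for X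
    using that
  proof (induction X rule: finite_induct)
    case empty
    obtain s where "s \<in> S" "act s a' = a" using transM[OF a'(1) a'(2) a(1)] by blast
    then show ?case using le_refl a by auto
  next
    case (insert x X)
    then obtain s where s: "s \<in> S" "le (act s a') a" "\<forall>y\<in>X. \<not> le (act s y) a" by auto
    have xx: "x \<in> M" "\<not> le x a'" using insert.prems by auto
    obtain t where t: "t \<in> S" "le (act t a') a" "\<not> le (act t x) a" using one[OF xx] by blast
    have "le (act (add s t) a') a" using s t act_add join_le acl a a' by simp
    moreover have "\<not> le (act (add s t) y) a" if "y \<in> insert x X" for y
      using that s t act_add join_le acl a insert.prems by auto
    ultimately show ?case using addS s t by blast
  qed
  obtain s where s: "s \<in> S" "le (act s a') a" "\<forall>x\<in>{x\<in>M. \<not> le x a'}. \<not> le (act s x) a"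
    using fin[of "{x\<in>M. \<not> le x a'}"] finM by auto
  have "le (act s x) a \<longleftrightarrow> le x a'" if "x \<in> M" for x
  proof
    assume "le (act s x) a" then show "le x a'" using s that by auto
  next
    assume "le x a'"
    then have "le (act s x) (act s a')" using act_mono s that a' by simp
    then show "le (act s x) a" using le_trans s acl that a a' by blast
  qed
  then show ?thesis using s by blast
qed


lemma max_elem:
  assumes X: "finite X" "X \<noteq> {}" "X \<subseteq> M" and jc: "\<And>x y. x \<in> X \<Longrightarrow> y \<in> X \<Longrightarrow> madd x y \<in> X"
  shows "\<exists>a\<in>X. \<forall>x\<in>X. le x a"
proof -
  have "\<exists>a\<in>X. \<forall>y\<in>Y. le y a" if "finite Y" "Y \<noteq> {}" "Y \<subseteq> X" for Y
    using that
  proof (induction Y rule: finite_ne_induct)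
    case (singleton y) then show ?case using le_refl X(3) by auto
  next
    case (insert y Y)
    then obtain a where a: "a \<in> X" "\<forall>z\<in>Y. le z a" by auto
    have yX: "y \<in> X" using insert by auto
    have aM: "a \<in> M" and yM: "y \<in> M" using a yX X(3) by auto
    have "le z (madd a y)" if "z \<in> insert y Y" for z
    proof (cases "z = y")
      case True then show ?thesis using le_madd2[OF aM yM] by simp
    next
      case False
      then have "z \<in> Y" using that by simp
      then have "le z a" "z \<in> M" using a insert X(3) by auto
      then show ?thesis using le_trans[OF _ aM mcl[OF aM yM] _ le_madd1[OF aM yM]] by simp
    qed
    then show ?case using jc[OF a(1) yX] by blast
  qed
  then show ?thesis using X by blast
qed

definition dom where "dom t = {x\<in>M. act t x \<noteq> g}"

lemma dom_comp: "s \<in> S \<Longrightarrow> t \<in> S \<Longrightarrow> dom (mul s t) \<subseteq> dom t"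
  unfolding dom_def using act_mul act_g by fastforce

lemma nontriv_act: "\<exists>t\<in>S. dom t \<noteq> {}"
proof -
  obtain x where x: "x \<in> M" "x \<noteq> g" using nontriv by blast
  obtain s where "s \<in> S" "act s x = x" using transM[OF x x(1)] by blast
  then have "x \<in> dom s" using x by (simp add: dom_def)
  then show ?thesis using \<open>s \<in> S\<close> by blast
qed

lemma min_support: "\<exists>t\<in>S. \<exists>a\<in>M. a \<noteq> g \<and> (\<forall>x\<in>M. act t x \<noteq> g \<longleftrightarrow> le x a)"
proof -
  obtain t0 where t0: "t0 \<in> S \<and> dom t0 \<noteq> {}" using nontriv_act by blast
  obtain t where t: "t \<in> S \<and> dom t \<noteq> {}"
    and tmin: "\<And>s. s \<in> S \<and> dom s \<noteq> {} \<Longrightarrow> card (dom t) \<le> card (dom s)"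
    using ex_has_least_nat[of "\<lambda>t. t \<in> S \<and> dom t \<noteq> {}" t0 "\<lambda>t. card (dom t)", OF t0] by blast
  have finD: "finite (dom s)" for s using finM by (simp add: dom_def)
  have eqd: "dom (mul s t) = dom t" if s: "s \<in> S" "dom (mul s t) \<noteq> {}" for s
  proof (rule card_subset_eq[OF finD dom_comp[OF s(1)]])
    show "card (dom (mul s t)) = card (dom t)"
      using t s tmin[of "mul s t"] card_mono[OF finD dom_comp[OF s(1)]] mulS[OF s(1)] by fastforce
  qed (use t in simp)
  have jc: "madd x1 x2 \<in> dom t" if x: "x1 \<in> dom t" "x2 \<in> dom t" for x1 x2
  proof -
    have x1: "x1 \<in> M" "act t x1 \<noteq> g" and x2: "x2 \<in> M" "act t x2 \<noteq> g" using x by (auto simp: dom_def)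
    obtain s where s: "s \<in> S" "act s (act t x1) = u" using transM[OF acl[OF _ x1(1)] x1(2) uM] t by blast
    have "x1 \<in> dom (mul s t)" using s x1 act_mul t u_ne by (simp add: dom_def)
    then have "x2 \<in> dom (mul s t)" using eqd[OF s(1)] x by auto
    then have "act (mul s t) x2 \<noteq> g" by (simp add: dom_def)
    then have v: "act s (act t x2) \<noteq> g" "act s (act t x2) \<in> M"
      using act_mul[OF s(1) _ x2(1)] t acl[OF s(1) acl[OF _ x2(1)]] by auto
    have "act s (act t (madd x1 x2)) = madd u (act s (act t x2))"
      using act_madd x1 x2 t s acl by simp
    then have "act s (act t (madd x1 x2)) \<noteq> g" using ustar[OF v(2) v(1)] by simp
    then have "act t (madd x1 x2) \<noteq> g" using act_g s by auto
    then show ?thesis using mcl x1 x2 by (simp add: dom_def)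
  qed
  obtain a where a: "a \<in> dom t" "\<forall>x\<in>dom t. le x a"
    using max_elem[of "dom t", OF finD] t jc by (auto simp: dom_def)
  have aM: "a \<in> M" "act t a \<noteq> g" using a by (auto simp: dom_def)
  have "a \<noteq> g" using aM act_g t by auto
  moreover have "act t x \<noteq> g \<longleftrightarrow> le x a" if x: "x \<in> M" for x
  proof
    assume "act t x \<noteq> g" then show "le x a" using a x by (auto simp: dom_def)
  next
    assume "le x a"
    then have "le (act t x) (act t a)" using act_mono t x aM by simp
    then show "act t x \<noteq> g" using aM top_le acl t by metis
  qed
  ultimately show ?thesis using t aM by blast
qed

lemma hp: assumes p: "p \<in> M" "p \<noteq> g" shows "\<exists>h\<in>S. \<forall>x\<in>M. act h x \<noteq> g \<longleftrightarrow> le x p"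
proof -
  obtain t a where t: "t \<in> S" "a \<in> M" "a \<noteq> g" "\<forall>x\<in>M. act t x \<noteq> g \<longleftrightarrow> le x a"
    using min_support by blast
  obtain r where r: "r \<in> S" "\<forall>x\<in>M. le (act r x) a \<longleftrightarrow> le x p"
    using dual_trans[OF t(2,3) p] by blast
  have "act (mul t r) x \<noteq> g \<longleftrightarrow> le x p" if x: "x \<in> M" for x
    using act_mul[OF t(1) r(1) x, symmetric] t(4) r(2) acl[OF r(1) x] x by simp
  then show ?thesis using mulS t r by blast
qed

lemma rank_one: "\<exists>t\<in>S. \<exists>a0\<in>M. \<exists>b\<in>M. a0 \<noteq> g \<and> b \<noteq> g \<and> (\<forall>x\<in>M. act t x = (if le x a0 then b else g))"
proof -
  define img where "img t = (\<lambda>x. act t x) ` M" for t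
  obtain t0 where t0: "t0 \<in> S \<and> dom t0 \<noteq> {}" using nontriv_act by blast
  obtain t where t: "t \<in> S \<and> dom t \<noteq> {}"
    and tmin: "\<And>s. s \<in> S \<and> dom s \<noteq> {} \<Longrightarrow> card (img t) \<le> card (img s)"
    using ex_has_least_nat[of "\<lambda>t. t \<in> S \<and> dom t \<noteq> {}" t0 "\<lambda>t. card (img t)", OF t0] by blast
  have tS: "t \<in> S" using t by simp
  have gimg: "g \<in> img t" using act_g[OF tS] gM by (force simp: img_def)
  have imgM: "img t \<subseteq> M" using acl tS by (auto simp: img_def)
  have finI: "finite (img t)" using finM by (simp add: img_def)
  have uniq: "p = q" if pq: "p \<in> img t" "q \<in> img t" "p \<noteq> g" "q \<noteq> g" for p q
  proof (rule ccontr)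
    assume ne: "p \<noteq> q"
    have "\<exists>p q. p \<in> img t \<and> q \<in> img t \<and> p \<noteq> g \<and> q \<noteq> g \<and> \<not> le q p"
    proof (cases "le q p")
      case True
      then have "\<not> le p q" using le_antisym ne pq imgM by blast
      then show ?thesis using pq by blast
    qed (use pq in blast)
    then obtain p q where pq: "p \<in> img t" "q \<in> img t" "p \<noteq> g" "q \<noteq> g" "\<not> le q p" by blast
    have pM: "p \<in> M" and qM: "q \<in> M" using pq imgM by auto
    obtain h where h: "h \<in> S" "\<forall>x\<in>M. act h x \<noteq> g \<longleftrightarrow> le x p" using hp[OF pM pq(3)] by blast
    have hp': "act h p \<noteq> g" using h pM le_refl by simp
    have hq: "act h q = g" using h(2) qM pq(5) by blast
    obtain x0 where x0: "x0 \<in> M" "p = act t x0" using pq(1) by (auto simp: img_def)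
    have "x0 \<in> dom (mul h t)" using x0 hp' act_mul h tS by (simp add: dom_def)
    then have C: "mul h t \<in> S \<and> dom (mul h t) \<noteq> {}" using mulS h tS by auto
    have ii: "img (mul h t) = (\<lambda>y. act h y) ` img t"
      unfolding img_def image_image using act_mul h tS by simp
    have "\<not> inj_on (\<lambda>y. act h y) (img t)"
      using hq act_g[OF h(1)] pq(2,4) gimg unfolding inj_on_def by metis
    then have "card ((\<lambda>y. act h y) ` img t) \<noteq> card (img t)" using eq_card_imp_inj_on finI by blast
    then have "card (img (mul h t)) < card (img t)" using ii card_image_le[OF finI] by (metis le_neq_implies_less)
    then show False using tmin[OF C] by simp
  qed
  obtain x0 where x0: "x0 \<in> M" "act t x0 \<noteq> g" using t by (auto simp: dom_def)
  define b where "b = act t x0"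
  have bM: "b \<in> M" "b \<noteq> g" using x0 acl tS by (auto simp: b_def)
  have two: "act t x = b \<or> act t x = g" if "x \<in> M" for x
    using uniq[of "act t x" b] that x0 by (auto simp: img_def b_def)
  have jc: "madd x1 x2 \<in> dom t" if x: "x1 \<in> dom t" "x2 \<in> dom t" for x1 x2
  proof -
    have "act t x1 = b" "act t x2 = b" "x1 \<in> M" "x2 \<in> M" using x two by (auto simp: dom_def)
    then show ?thesis using act_madd tS midem bM mcl by (simp add: dom_def)
  qed
  have finD: "finite (dom t)" using finM by (simp add: dom_def)
  obtain a0 where a0: "a0 \<in> dom t" "\<forall>x\<in>dom t. le x a0"
    using max_elem[of "dom t", OF finD] t jc by (auto simp: dom_def)
  have a0M: "a0 \<in> M" "act t a0 = b" using a0 two by (auto simp: dom_def)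
  have a0g: "a0 \<noteq> g" using a0M act_g tS bM by auto
  have "act t x = (if le x a0 then b else g)" if x: "x \<in> M" for x
  proof (cases "le x a0")
    case True
    then have "le (act t x) b" using act_mono[OF tS x a0M(1)] a0M by simp
    then have "act t x \<noteq> g" using top_le bM by auto
    then show ?thesis using True two x by auto
  next
    case False
    then have "x \<notin> dom t" using a0 by auto
    then show ?thesis using False x by (simp add: dom_def)
  qed
  then show ?thesis using tS a0M a0g bM by blast
qed

lemma fab_in: assumes a: "a \<in> M" "a \<noteq> g" and b': "b' \<in> M"
  shows "\<exists>s\<in>S. \<forall>x\<in>M. act s x = (if le x a then b' else g)"
proof -
  obtain t a0 b where t: "t \<in> S" "a0 \<in> M" "b \<in> M" "a0 \<noteq> g" "b \<noteq> g"
    "\<forall>x\<in>M. act t x = (if le x a0 then b else g)" using rank_one by blast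
  obtain s1 where s1: "s1 \<in> S" "act s1 b = b'" using transM[OF t(3) t(5) b'] by blast
  obtain r where r: "r \<in> S" "\<forall>x\<in>M. le (act r x) a0 \<longleftrightarrow> le x a"
    using dual_trans[OF t(2,4) a] by blast
  have "act (mul s1 (mul t r)) x = (if le x a then b' else g)" if x: "x \<in> M" for x
  proof -
    have "act (mul s1 (mul t r)) x = act s1 (act t (act r x))"
      using act_mul s1 t r x mulS acl by simp
    also have "\<dots> = (if le x a then b' else g)"
      using t(6) r(2) acl[OF r(1) x] x s1 act_g by simp
    finally show ?thesis .
  qed
  then show ?thesis using mulS s1 t r by blast
qed


text \<open>Step 9: condition (ii) from simplicity.\<close>

definition Iset where
  "Iset = {s\<in>S. \<exists>a\<in>M. a \<noteq> g \<and> (\<exists>b\<in>M. \<forall>x\<in>M. le (if le x a then b else g) (act s x))}"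

lemma I_add: assumes s: "s \<in> Iset" and r: "r \<in> S" shows "add s r \<in> Iset"
proof -
  obtain a b where ab: "a \<in> M" "a \<noteq> g" "b \<in> M" "\<forall>x\<in>M. le (if le x a then b else g) (act s x)"
    and sS: "s \<in> S" using s by (auto simp: Iset_def)
  have "le (if le x a then b else g) (act (add s r) x)" if x: "x \<in> M" for x
  proof -
    have fM: "(if le x a then b else g) \<in> M" using ab gM by simp
    show ?thesis using le_trans[OF fM acl[OF sS x] _ ab(4)[rule_format, OF x] le_madd1[OF acl[OF sS x] acl[OF r x]]]
      act_add[OF sS r x] acl[OF addS[OF sS r] x] by simp
  qed
  then show ?thesis using ab addS[OF sS r] unfolding Iset_def by blast
qed

lemma I_mull: assumes s: "s \<in> Iset" and r: "r \<in> S" shows "mul r s \<in> Iset"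
proof -
  obtain a b where ab: "a \<in> M" "a \<noteq> g" "b \<in> M" "\<forall>x\<in>M. le (if le x a then b else g) (act s x)"
    and sS: "s \<in> S" using s by (auto simp: Iset_def)
  have "le (if le x a then act r b else g) (act (mul r s) x)" if x: "x \<in> M" for x
  proof -
    have fM: "(if le x a then b else g) \<in> M" using ab gM by simp
    have "le (act r (if le x a then b else g)) (act r (act s x))"
      using act_mono[OF r fM acl[OF sS x] ab(4)[rule_format, OF x]] .
    then show ?thesis using act_mul[OF r sS x] act_g[OF r] by (simp split: if_splits)
  qed
  then show ?thesis using ab mulS[OF r sS] acl[OF r ab(3)] unfolding Iset_def by blast
qed

lemma I_mulr: assumes s: "s \<in> Iset" and r: "r \<in> S" shows "mul s r \<in> Iset"
proof -
  obtain a b where ab: "a \<in> M" "a \<noteq> g" "b \<in> M" "\<forall>x\<in>M. le (if le x a then b else g) (act s x)"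
    and sS: "s \<in> S" using s by (auto simp: Iset_def)
  have srS: "mul s r \<in> S" using mulS sS r by simp
  define A where "A = {x\<in>M. le (act r x) a}"
  have gA: "act s (act r x) = g" if x: "x \<in> M" "x \<notin> A" for x
  proof -
    have "le g (act s (act r x))" using ab(4)[rule_format, OF acl[OF r x(1)]] x by (simp add: A_def)
    then show ?thesis using top_le acl sS r x by blast
  qed
  show ?thesis
  proof (cases "A = {}")
    case True
    obtain a2 where a2: "a2 \<in> M" "a2 \<noteq> g" using nontriv by blast
    have "le (if le x a2 then g else g) (act (mul s r) x)" if x: "x \<in> M" for x
      using gA[OF x] True act_mul[OF sS r x] midem gM by simp
    then show ?thesis using srS a2 gM unfolding Iset_def by blast
  next
    case False
    have finA: "finite A" using finM by (simp add: A_def)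
    have jc: "madd x y \<in> A" if "x \<in> A" "y \<in> A" for x y
      using that act_madd[OF r] join_le acl[OF r] ab(1) mcl by (simp add: A_def)
    obtain a' where a': "a' \<in> A" "\<forall>x\<in>A. le x a'"
      using max_elem[OF finA False _ jc] by (auto simp: A_def)
    have a'M: "a' \<in> M" using a' by (simp add: A_def)
    have a'g: "a' \<noteq> g"
    proof
      assume "a' = g"
      then have "le g a" using a' act_g[OF r] by (simp add: A_def)
      then show False using top_le ab by blast
    qed
    have "le (if le x a' then b else g) (act (mul s r) x)" if x: "x \<in> M" for x
    proof (cases "le x a'")
      case True
      have "le (act r x) (act r a')" using act_mono[OF r x a'M True] .
      moreover have "le (act r a') a" using a' by (simp add: A_def)
      ultimately have "le (act r x) a" using le_trans acl r x a'M ab(1) by blast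
      then have "le b (act s (act r x))" using ab(4)[rule_format, OF acl[OF r x]] by simp
      then show ?thesis using True act_mul[OF sS r x] by simp
    next
      case False
      then have "x \<notin> A" using a' by auto
      then show ?thesis using False gA[OF x] act_mul[OF sS r x] midem gM by simp
    qed
    then show ?thesis using srS a'M a'g ab(3) unfolding Iset_def by blast
  qed
qed

lemma cond_ii: assumes s: "s \<in> S"
  shows "\<exists>a\<in>M. a \<noteq> g \<and> (\<exists>b\<in>M. \<forall>x\<in>M. le (if le x a then b else g) (act s x))"
proof -
  define f where "f x = (if x \<in> Iset then None else Some x)" for x
  have IS: "Iset \<subseteq> S" by (auto simp: Iset_def)
  have fe: "f x = f y \<longleftrightarrow> x = y \<or> (x \<in> Iset \<and> y \<in> Iset)" for x y by (auto simp: f_def)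
  have cg: "semiring_cong S add mul (ker S f)"
    unfolding semiring_cong_def
  proof (intro conjI allI impI ker_equiv)
    fix a b c d assume ab: "(a,b) \<in> ker S f" and cd: "(c,d) \<in> ker S f"
    have abS: "a \<in> S" "b \<in> S" "a = b \<or> (a \<in> Iset \<and> b \<in> Iset)" using ab fe by (auto simp: ker_def)
    have cdS: "c \<in> S" "d \<in> S" "c = d \<or> (c \<in> Iset \<and> d \<in> Iset)" using cd fe by (auto simp: ker_def)
    have "add a c = add b d \<or> (add a c \<in> Iset \<and> add b d \<in> Iset)"
    proof (cases "a = b")
      case True
      show ?thesis
      proof (cases "c = d")
        case False
        then have "c \<in> Iset" "d \<in> Iset" using cdS by auto
        then have "add c a \<in> Iset" "add d b \<in> Iset" using I_add abS by auto
        then show ?thesis using add_comm abS cdS by auto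
      qed (use True in simp)
    next
      case False
      then have "a \<in> Iset" "b \<in> Iset" using abS by auto
      then show ?thesis using I_add cdS by auto
    qed
    then show "(add a c, add b d) \<in> ker S f" using fe addS abS cdS by (auto simp: ker_def)
    have "mul a c = mul b d \<or> (mul a c \<in> Iset \<and> mul b d \<in> Iset)"
    proof (cases "a = b")
      case True
      show ?thesis
      proof (cases "c = d")
        case False
        then have "c \<in> Iset" "d \<in> Iset" using cdS by auto
        then show ?thesis using I_mull abS by auto
      qed (use True in simp)
    next
      case False
      then have "a \<in> Iset" "b \<in> Iset" using abS by auto
      then show ?thesis using I_mulr cdS by auto
    qed
    then show "(mul a c, mul b d) \<in> ker S f" using fe mulS abS cdS by (auto simp: ker_def)
  qed
  obtain a2 where a2: "a2 \<in> M" "a2 \<noteq> g" using nontriv by blast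
  have oI: "ob \<in> Iset" using oS a2 gM o_const midem unfolding Iset_def by auto
  obtain t a0 b where t: "t \<in> S" "a0 \<in> M" "b \<in> M" "a0 \<noteq> g" "b \<noteq> g"
    "\<forall>x\<in>M. act t x = (if le x a0 then b else g)" using rank_one by blast
  have "\<forall>x\<in>M. le (if le x a0 then b else g) (act t x)"
  proof
    fix x assume x: "x \<in> M"
    show "le (if le x a0 then b else g) (act t x)" using t(6) x midem[OF t(3)] midem[OF gM] by simp
  qed
  then have tI: "t \<in> Iset" using t unfolding Iset_def by blast
  have "t \<noteq> ob" using t o_const le_refl by force
  moreover have "(t, ob) \<in> ker S f" using fe tI oI IS by (auto simp: ker_def)
  ultimately have "ker S f \<noteq> Id_on S" by (auto simp: Id_on_def)
  then have "ker S f = S \<times> S" using simp_cong[OF cg] by simp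
  then have "f s = f ob" using ker_all[of S f s ob] s oS by blast
  then have "s \<in> Iset" using fe oI by auto
  then show ?thesis by (simp add: Iset_def)
qed

lemma faithful: "inj_on (\<lambda>s. restrict (act s) M) S"
proof -
  define f where "f s = restrict (act s) M" for s
  have ap: "f s = f t \<longleftrightarrow> (\<forall>x\<in>M. act s x = act t x)" for s t
  proof
    assume h: "f s = f t"
    show "\<forall>x\<in>M. act s x = act t x"
    proof
      fix x assume "x \<in> M"
      then show "act s x = act t x" using fun_cong[OF h, of x] by (simp add: f_def)
    qed
  next
    assume "\<forall>x\<in>M. act s x = act t x"
    then show "f s = f t" unfolding f_def by (intro restrict_ext) simp
  qed
  have kf: "(a, b) \<in> ker S f \<longleftrightarrow> a \<in> S \<and> b \<in> S \<and> (\<forall>x\<in>M. act a x = act b x)" for a b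
    unfolding ker_def using ap by blast
  have cg: "semiring_cong S add mul (ker S f)"
    unfolding semiring_cong_def
  proof (intro conjI allI impI ker_equiv)
    fix a b c d assume ab: "(a,b) \<in> ker S f" and cd: "(c,d) \<in> ker S f"
    have abS: "a \<in> S" "b \<in> S" "\<forall>x\<in>M. act a x = act b x" using ab kf by auto
    have cdS: "c \<in> S" "d \<in> S" "\<forall>x\<in>M. act c x = act d x" using cd kf by auto
    have "act (add a c) x = act (add b d) x" if x: "x \<in> M" for x
      using act_add[OF abS(1) cdS(1) x] act_add[OF abS(2) cdS(2) x] abS(3) cdS(3) x by simp
    then show "(add a c, add b d) \<in> ker S f" using kf addS abS cdS by blast
    have "act (mul a c) x = act (mul b d) x" if x: "x \<in> M" for x
    proof -
      have "act (mul a c) x = act a (act c x)" using act_mul[OF abS(1) cdS(1) x] by simp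
      also have "\<dots> = act b (act d x)" using abS(3) cdS(3) x acl[OF cdS(2) x] by simp
      also have "\<dots> = act (mul b d) x" using act_mul[OF abS(2) cdS(2) x] by simp
      finally show ?thesis .
    qed
    then show "(mul a c, mul b d) \<in> ker S f" using kf mulS abS cdS by blast
  qed
  have "ker S f \<noteq> S \<times> S"
  proof
    assume h: "ker S f = S \<times> S"
    have "act r x = act s x" if "r \<in> S" "s \<in> S" "x \<in> M" for r s x
      using h kf that by blast
    then have "quasitrivial S M act" unfolding quasitrivial_def by blast
    then show False using nqt by simp
  qed
  then have kI: "ker S f = Id_on S" using simp_cong[OF cg] by blast
  show ?thesis unfolding inj_on_def
  proof (intro ballI impI)
    fix x y assume "x \<in> S" "y \<in> S" "restrict (act x) M = restrict (act y) M"
    then show "x = y" using ker_Id[OF kI] by (simp add: f_def)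
  qed
qed


definition phi where "phi s = restrict (act s) M"

lemma phi_ap: "x \<in> M \<Longrightarrow> phi s x = act s x" by (simp add: phi_def)

lemma conclusion:
  "\<exists>(L :: 'm set) j one (R :: ('m \<Rightarrow> 'm) set) \<phi>.
     admissible L j one R \<and> semiring_iso S add mul R (fjoin L j) (fcomp L) \<phi>"
proof -
  have fjs: "fjoin M madd (phi s) (phi t) = phi (add s t)" if "s \<in> S" "t \<in> S" for s t
    unfolding fjoin_def phi_def using act_add[OF that] by (intro restrict_ext) simp
  have fcs: "fcomp M (phi s) (phi t) = phi (mul s t)" if "s \<in> S" "t \<in> S" for s t
    unfolding fcomp_def phi_def using act_mul[OF that] acl[OF that(2)] by (intro restrict_ext) simp
  have fsl: "fin_join_sl M madd g"
    unfolding fin_join_sl_def using finM gM mcl mcomm midem massoc gtop by blast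
  have star: "sl_star M madd"
    unfolding sl_star_def using finM gM gtop uM ustar by blast
  have RJ: "phi ` S \<subseteq> JM1 M madd g"
  proof
    fix f assume "f \<in> phi ` S"
    then obtain s where s: "s \<in> S" "f = phi s" by blast
    show "f \<in> JM1 M madd g"
      unfolding JM1_def using s act_g[OF s(1)] gM acl[OF s(1)] act_madd[OF s(1)] mcl
      by (auto simp: phi_def)
  qed
  have cl: "\<forall>f\<in>phi ` S. \<forall>h\<in>phi ` S. fjoin M madd f h \<in> phi ` S \<and> fcomp M f h \<in> phi ` S"
    using fjs fcs addS mulS by auto
  have ci: "\<forall>a\<in>M - {g}. \<forall>b\<in>M. fab M madd g a b \<in> phi ` S"
  proof (intro ballI)
    fix a b assume a: "a \<in> M - {g}" and b: "b \<in> M"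
    obtain s where s: "s \<in> S" "\<forall>x\<in>M. act s x = (if le x a then b else g)"
      using fab_in[OF _ _ b] a by blast
    have "fab M madd g a b = phi s"
      unfolding fab_def phi_def sl_le_def using s(2) by (intro restrict_ext) simp
    then show "fab M madd g a b \<in> phi ` S" using s(1) by blast
  qed
  have cii: "\<forall>f\<in>phi ` S. \<exists>a\<in>M - {g}. \<exists>b\<in>M. \<forall>x\<in>M. sl_le madd (fab M madd g a b x) (f x)"
  proof
    fix f assume "f \<in> phi ` S"
    then obtain s where s: "s \<in> S" "f = phi s" by blast
    obtain a b where ab: "a \<in> M" "a \<noteq> g" "b \<in> M" "\<forall>x\<in>M. le (if le x a then b else g) (act s x)"
      using cond_ii[OF s(1)] by blast
    have "\<forall>x\<in>M. sl_le madd (fab M madd g a b x) (f x)"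
      using ab(4) s(2) by (simp add: fab_def sl_le_def phi_def)
    then show "\<exists>a\<in>M - {g}. \<exists>b\<in>M. \<forall>x\<in>M. sl_le madd (fab M madd g a b x) (f x)"
      using ab by blast
  qed
  have adm: "admissible M madd g (phi ` S)"
    unfolding admissible_def using fsl nontriv star RJ Sne cl ci cii by blast
  have inj: "inj_on phi S" using faithful unfolding phi_def .
  have iso: "semiring_iso S add mul (phi ` S) (fjoin M madd) (fcomp M) phi"
    unfolding semiring_iso_def bij_betw_def using inj fjs fcs by simp
  show ?thesis using adm iso by blast
qed

end

lemma part2:
  fixes S :: "'s set" and M :: "'m set"
  assumes "finite S \<and> simple_semiring S add mul \<and> add_idempotent S add \<and>
           card S > 2 \<and> has_absorbing_greatest S add mul \<and>
           semimodule S add mul M madd act \<and> smod_idempotent M madd \<and>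
           irreducible_smod S add mul M madd act \<and> sl_star M madd"
  shows "\<exists>(L :: 'm set) j one (R :: ('m \<Rightarrow> 'm) set) \<phi>.
              admissible L j one R \<and>
              semiring_iso S add mul R (fjoin L j) (fcomp L) \<phi>"
proof -
  have h: "finite S" "simple_semiring S add mul" "has_absorbing_greatest S add mul"
    "semimodule S add mul M madd act" "smod_idempotent M madd"
    "irreducible_smod S add mul M madd act" "sl_star M madd" using assms by auto
  obtain g u where gu: "finite M" "g \<in> M" "\<And>x. x \<in> M \<Longrightarrow> madd x g = g" "u \<in> M"
    "\<And>x. x \<in> M \<Longrightarrow> x \<noteq> g \<Longrightarrow> g \<noteq> madd u x"
    using h(7) unfolding sl_star_def by blast
  obtain o' where o': "o' \<in> S" "\<And>x. x \<in> S \<Longrightarrow> add x o' = o'"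
    "\<And>s. s \<in> S \<Longrightarrow> mul s o' = o' \<and> mul o' s = o'"
    using h(3) unfolding has_absorbing_greatest_def by blast
  interpret P2 S add mul M madd act g u o'
    by (rule P2.intro) (use h gu o' in auto)
  show ?thesis by (rule conclusion)
qed


theorem theorem5p4:
  shows "(\<forall>(L :: 'l set) j one (R :: ('l \<Rightarrow> 'l) set).
           admissible L j one R \<longrightarrow>
             finite R \<and> simple_semiring R (fjoin L j) (fcomp L) \<and>
             add_idempotent R (fjoin L j) \<and>
             has_absorbing_greatest R (fjoin L j) (fcomp L) \<and>
             (\<exists>(M :: 'l set) madd act.
                semimodule R (fjoin L j) (fcomp L) M madd act \<and>
                smod_idempotent M madd \<and>
                irreducible_smod R (fjoin L j) (fcomp L) M madd act \<and>
                sl_star M madd))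
       \<and>
       (\<forall>(S :: 's set) add mul (M :: 'm set) madd act.
           finite S \<and> simple_semiring S add mul \<and> add_idempotent S add \<and>
           card S > 2 \<and> has_absorbing_greatest S add mul \<and>
           semimodule S add mul M madd act \<and> smod_idempotent M madd \<and>
           irreducible_smod S add mul M madd act \<and> sl_star M madd \<longrightarrow>
           (\<exists>(L :: 'm set) j one (R :: ('m \<Rightarrow> 'm) set) \<phi>.
              admissible L j one R \<and>
              semiring_iso S add mul R (fjoin L j) (fcomp L) \<phi>))"
proof (rule conjI)
  show "\<forall>(L :: 'l set) j one (R :: ('l \<Rightarrow> 'l) set). admissible L j one R \<longrightarrow>
             finite R \<and> simple_semiring R (fjoin L j) (fcomp L) \<and>
             add_idempotent R (fjoin L j) \<and>
             has_absorbing_greatest R (fjoin L j) (fcomp L) \<and>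
             (\<exists>(M :: 'l set) madd act.
                semimodule R (fjoin L j) (fcomp L) M madd act \<and>
                smod_idempotent M madd \<and>
                irreducible_smod R (fjoin L j) (fcomp L) M madd act \<and>
                sl_star M madd)"
    by (intro allI impI part1)
next
  show "\<forall>(S :: 's set) add mul (M :: 'm set) madd act.
           finite S \<and> simple_semiring S add mul \<and> add_idempotent S add \<and>
           card S > 2 \<and> has_absorbing_greatest S add mul \<and>
           semimodule S add mul M madd act \<and> smod_idempotent M madd \<and>
           irreducible_smod S add mul M madd act \<and> sl_star M madd \<longrightarrow>
           (\<exists>(L :: 'm set) j one (R :: ('m \<Rightarrow> 'm) set) \<phi>.
              admissible L j one R \<and>
              semiring_iso S add mul R (fjoin L j) (fcomp L) \<phi>)"
    by (intro allI impI part2)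
qed

end
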